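(* Let $n$ be an odd positive integer, fix $\epsilon$ with $0<\epsilon<\frac12$, and let the parameter space be $\Theta^*=\{(\theta,\gamma_1,\dots,\gamma_n):\theta\in\{0,1\},\ \gamma_i\ge\frac12+\epsilon\ \forall i\}$ (with $\gamma_i\le 1$). Conditionally on $(\theta,\boldsymbol\gamma)\in\Theta^*$, let $Y_1,\dots,Y_n\in\{0,1\}$ be independent with $\mathbb{P}(Y_i=1\mid\theta=1,\boldsymbol\gamma)=\mathbb{P}(Y_i=0\mid\theta=0,\boldsymbol\gamma)=\gamma_i$, and let $U\sim\mathrm{Bernoulli}(1/2)$ be independent of $\vec Y$. Decision rules are functions $\delta:\{0,1\}^n\times\{0,1\}\to\{0,1\}$ with loss $L(\theta,a)=\mathbb{I}(\theta\ne a)$ and risk $R(\delta,\xi)=\mathbb{E}[L(\theta,\delta(\vec Y,U))\mid\xi]$ for $\xi=(\theta,\boldsymbol\gamma)$. Then the majority rule $\delta_M$, defined by $\delta_M(\vec y,u)=1$ if $\bar y>\frac12$ and $\delta_M(\vec y,u)=0$ otherwise (where $\bar y=\frac1n\sum_iy_i$), is minimax on $\Theta^*$: $\sup_{\xi\in\Theta^*}R(\delta_M,\xi)=\inf_\delta\sup_{\xi\in\Theta^*}R(\delta,\xi)$.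
   Context: Since $n$ is odd, $\bar y=\frac12$ cannot occur. *)

theory Defs
  imports Complex_Main
begin

text \<open>Binary values {0,1} are encoded as bool (True = 1, False = 0).
  Observations y in {0,1}^n are bool lists of length n; gamma is a real list of length n.\<close>

definition obs_space :: "nat \<Rightarrow> bool list set" where
  "obs_space n = {ys. length ys = n}"

definition prob_Y :: "bool \<Rightarrow> real list \<Rightarrow> bool list \<Rightarrow> real" where
  "prob_Y \<theta> \<gamma> ys = (\<Prod>i<length ys. if ys ! i = \<theta> then \<gamma> ! i else 1 - \<gamma> ! i)"

definition loss :: "bool \<Rightarrow> bool \<Rightarrow> real" where
  "loss \<theta> a = (if \<theta> \<noteq> a then 1 else 0)"

definition risk :: "nat \<Rightarrow> (bool list \<Rightarrow> bool \<Rightarrow> bool) \<Rightarrow> bool \<times> real list \<Rightarrow> real" where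
  "risk n \<delta> \<xi> = (\<Sum>ys\<in>obs_space n. \<Sum>u\<in>(UNIV::bool set).
       (1/2) * prob_Y (fst \<xi>) (snd \<xi>) ys * loss (fst \<xi>) (\<delta> ys u))"

definition Theta_star :: "nat \<Rightarrow> real \<Rightarrow> (bool \<times> real list) set" where
  "Theta_star n \<epsilon> = {(\<theta>, \<gamma>). length \<gamma> = n \<and>
       (\<forall>i<n. 1/2 + \<epsilon> \<le> \<gamma> ! i \<and> \<gamma> ! i \<le> 1)}"

definition ybar :: "bool list \<Rightarrow> real" where
  "ybar ys = (\<Sum>i<length ys. if ys ! i then 1 else 0) / real (length ys)"

definition majority_rule :: "bool list \<Rightarrow> bool \<Rightarrow> bool" where
  "majority_rule ys u = (ybar ys > 1/2)"

end

theory Submission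
  imports Defs
begin

definition ncorr :: "bool \<Rightarrow> bool list \<Rightarrow> nat" where
  "ncorr \<theta> ys = length (filter (\<lambda>y. y = \<theta>) ys)"

fun pc :: "real list \<Rightarrow> int \<Rightarrow> real" where
  "pc [] k = (if 0 \<le> k then 1 else 0)"
| "pc (g#gs) k = g * pc gs (k-1) + (1-g) * pc gs k"

lemma finite_obs: "finite (obs_space n)"
proof -
  have "obs_space n = {xs. set xs \<subseteq> (UNIV::bool set) \<and> length xs = n}"
    unfolding obs_space_def by auto
  then show ?thesis using finite_lists_length_eq[of "UNIV::bool set" n] by simp
qed

lemma obs_Suc: "obs_space (Suc n) = Cons True ` obs_space n \<union> Cons False ` obs_space n"
  unfolding obs_space_def
proof (intro set_eqI iffI)
  fix xs :: "bool list" assume "xs \<in> {ys. length ys = Suc n}"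
  then show "xs \<in> Cons True ` {ys. length ys = n} \<union> Cons False ` {ys. length ys = n}"
    by (cases xs) auto
qed auto

lemma sum_obs_Suc:
  "(\<Sum>ys\<in>obs_space (Suc n). F ys) = (\<Sum>ys\<in>obs_space n. F (True#ys) + F (False#ys))"
proof -
  have "(\<Sum>ys\<in>obs_space (Suc n). F ys) =
        (\<Sum>ys\<in>Cons True ` obs_space n. F ys) + (\<Sum>ys\<in>Cons False ` obs_space n. F ys)"
    unfolding obs_Suc by (rule sum.union_disjoint) (auto simp: finite_obs)
  also have "\<dots> = (\<Sum>ys\<in>obs_space n. F (True#ys)) + (\<Sum>ys\<in>obs_space n. F (False#ys))"
    by (simp add: sum.reindex)
  finally show ?thesis by (simp add: sum.distrib)
qed

lemma obs_0: "obs_space 0 = {[]}"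
  unfolding obs_space_def by auto

lemma prob_Y_Cons:
  "prob_Y \<theta> (g#gs) (y#ys) = (if y = \<theta> then g else 1 - g) * prob_Y \<theta> gs ys"
  unfolding prob_Y_def by (simp only: length_Cons prod.lessThan_Suc_shift nth_Cons_0 nth_Cons_Suc)

lemma prob_Y_Nil: "prob_Y \<theta> gs [] = 1"
  unfolding prob_Y_def by simp

lemma ncorr_Cons: "ncorr \<theta> (y#ys) = (if y = \<theta> then 1 else 0) + ncorr \<theta> ys"
  unfolding ncorr_def by simp

lemma sumA:
  "(\<Sum>ys\<in>obs_space (length \<gamma>). prob_Y \<theta> \<gamma> ys * (if int (ncorr \<theta> ys) \<le> k then 1 else 0)) = pc \<gamma> k"
proof (induction \<gamma> arbitrary: k)
  case Nil
  then show ?case by (simp add: obs_0 prob_Y_Nil ncorr_def)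
next
  case (Cons g gs)
  have e: "\<And>ys. prob_Y \<theta> (g#gs) (True#ys) * (if int (ncorr \<theta> (True#ys)) \<le> k then 1 else 0)
      + prob_Y \<theta> (g#gs) (False#ys) * (if int (ncorr \<theta> (False#ys)) \<le> k then 1 else 0)
      = g * (prob_Y \<theta> gs ys * (if int (ncorr \<theta> ys) \<le> k - 1 then 1 else 0))
        + (1-g) * (prob_Y \<theta> gs ys * (if int (ncorr \<theta> ys) \<le> k then 1 else 0))"
    by (cases \<theta>) (auto simp: prob_Y_Cons ncorr_Cons algebra_simps)
  show ?case
    by (simp only: length_Cons sum_obs_Suc e sum.distrib sum_distrib_left[symmetric] Cons pc.simps)
qed

lemma pc_bounds: "\<forall>g\<in>set gs. 0 \<le> g \<and> g \<le> 1 \<Longrightarrow> 0 \<le> pc gs k \<and> pc gs k \<le> 1"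
proof (induction gs arbitrary: k)
  case Nil then show ?case by simp
next
  case (Cons g gs)
  have a: "0 \<le> pc gs (k-1)" "pc gs (k-1) \<le> 1" "0 \<le> pc gs k" "pc gs k \<le> 1" 
    using Cons by auto
  have g: "0 \<le> g" "g \<le> 1" using Cons.prems by auto
  have "g * pc gs (k-1) \<le> g" using a g by (simp add: mult_left_le)
  moreover have "(1-g) * pc gs k \<le> 1 - g" using a g by (simp add: mult_left_le)
  ultimately show ?case using a g by simp
qed

lemma pc_mono: "\<forall>g\<in>set gs. 0 \<le> g \<and> g \<le> 1 \<Longrightarrow> k \<le> k' \<Longrightarrow> pc gs k \<le> pc gs k'"
proof (induction gs arbitrary: k k')
  case Nil then show ?case by simp
next
  case (Cons g gs)
  have a: "pc gs (k-1) \<le> pc gs (k'-1)" "pc gs k \<le> pc gs k'" using Cons by auto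
  have g: "0 \<le> g" "g \<le> 1" using Cons.prems by auto
  show ?case using a g by (simp add: add_mono mult_left_mono)
qed

lemma pc_anti:
  assumes "list_all2 (\<le>) \<gamma>' \<gamma>" "\<forall>g\<in>set \<gamma>'. 0 \<le> g \<and> g \<le> 1" "\<forall>g\<in>set \<gamma>. 0 \<le> g \<and> g \<le> 1"
  shows "pc \<gamma> k \<le> pc \<gamma>' k"
  using assms
proof (induction arbitrary: k rule: list_all2_induct)
  case Nil then show ?case by simp
next
  case (Cons g' gs' g gs)
  define a where "a = pc gs (k-1)"
  define b where "b = pc gs k"
  define a' where "a' = pc gs' (k-1)"
  define b' where "b' = pc gs' k"
  have h: "a \<le> a'" "b \<le> b'" using Cons unfolding a_def b_def a'_def b'_def by auto
  have h2: "a' \<le> b'" unfolding a'_def b'_def using Cons.prems by (intro pc_mono) auto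
  have g: "0 \<le> g" "g \<le> 1" "g' \<le> g" "0 \<le> g'" using Cons by auto
  have "g * a + (1-g) * b \<le> g * a' + (1-g) * b'"
    using h g by (simp add: add_mono mult_left_mono)
  also have "\<dots> \<le> g' * a' + (1-g') * b'"
  proof -
    have "(g - g') * (b' - a') \<ge> 0" using g h2 by simp
    then show ?thesis by (simp add: algebra_simps)
  qed
  finally show ?case unfolding a_def b_def a'_def b'_def by simp
qed

lemma count_sum: "(\<Sum>i<length ys. if ys ! i then 1 else 0) = real (ncorr True ys)"
  by (induction ys) (simp_all add: sum.lessThan_Suc_shift ncorr_def del: sum.lessThan_Suc)

lemma ncorr_False: "ncorr False ys = length ys - ncorr True ys"
  unfolding ncorr_def using sum_length_filter_compl[of "\<lambda>y. y" ys] by simp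

lemma ncorr_le: "ncorr \<theta> ys \<le> length ys"
  unfolding ncorr_def by simp

lemma prob_nonneg:
  assumes "length \<gamma> = length ys" "\<forall>g\<in>set \<gamma>. 0 \<le> g \<and> g \<le> 1"
  shows "0 \<le> prob_Y \<theta> \<gamma> ys"
  unfolding prob_Y_def using assms by (intro prod_nonneg) (auto simp: nth_mem)

lemma maj_iff:
  assumes "odd n" "length ys = n"
  shows "majority_rule ys u \<longleftrightarrow> \<not> ncorr True ys \<le> n div 2"
proof -
  have n: "n > 0" using assms by (cases n) auto
  have "majority_rule ys u \<longleftrightarrow> real (ncorr True ys) / real n > 1/2"
    unfolding majority_rule_def ybar_def count_sum using assms by simp
  also have "\<dots> \<longleftrightarrow> 2 * real (ncorr True ys) > real n" using n by (simp add: field_simps)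
  also have "\<dots> \<longleftrightarrow> 2 * ncorr True ys > n" by linarith
  also have "\<dots> \<longleftrightarrow> \<not> ncorr True ys \<le> n div 2" using assms(1) by presburger
  finally show ?thesis .
qed

lemma loss_maj:
  assumes "odd n" "length ys = n"
  shows "loss \<theta> (majority_rule ys u) = (if int (ncorr \<theta> ys) \<le> int (n div 2) then 1 else 0)"
proof (cases \<theta>)
  case True then show ?thesis using maj_iff[OF assms] by (simp add: loss_def)
next
  case False
  have "ncorr False ys = n - ncorr True ys" using ncorr_False assms by simp
  moreover have "ncorr True ys \<le> n" using ncorr_le assms by metis
  ultimately show ?thesis using False maj_iff[OF assms, of u] assms(1) unfolding loss_def
    by (auto, presburger+)
qed

lemma sum_bool: "(\<Sum>u\<in>(UNIV::bool set). f u) = f True + f False"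
  by (simp add: UNIV_bool add.commute)

lemma risk_maj:
  assumes "odd n" "length \<gamma> = n"
  shows "risk n majority_rule (\<theta>, \<gamma>) = pc \<gamma> (int (n div 2))"
proof -
  have "risk n majority_rule (\<theta>, \<gamma>) = (\<Sum>ys\<in>obs_space (length \<gamma>).
      prob_Y \<theta> \<gamma> ys * (if int (ncorr \<theta> ys) \<le> int (n div 2) then 1 else 0))"
    unfolding risk_def sum_bool using assms
    by (intro sum.cong) (auto simp: obs_space_def loss_maj)
  then show ?thesis by (simp only: sumA)
qed

lemma risk_le1:
  assumes "length \<gamma> = n" "\<forall>g\<in>set \<gamma>. 0 \<le> g \<and> g \<le> 1"
  shows "risk n \<delta> (\<theta>, \<gamma>) \<le> 1"
proof -
  have "risk n \<delta> (\<theta>, \<gamma>) \<le> (\<Sum>ys\<in>obs_space n.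
      prob_Y \<theta> \<gamma> ys * (if int (ncorr \<theta> ys) \<le> int n then 1 else 0))"
    unfolding risk_def sum_bool
  proof (intro sum_mono)
    fix ys assume "ys \<in> obs_space n"
    then have l: "length ys = n" by (simp add: obs_space_def)
    then have p: "0 \<le> prob_Y \<theta> \<gamma> ys" using assms prob_nonneg by metis
    have c: "int (ncorr \<theta> ys) \<le> int n" using ncorr_le[of \<theta> ys] l by simp
    show "1 / 2 * prob_Y (fst (\<theta>, \<gamma>)) (snd (\<theta>, \<gamma>)) ys * loss (fst (\<theta>, \<gamma>)) (\<delta> ys True) +
        1 / 2 * prob_Y (fst (\<theta>, \<gamma>)) (snd (\<theta>, \<gamma>)) ys * loss (fst (\<theta>, \<gamma>)) (\<delta> ys False)
       \<le> prob_Y \<theta> \<gamma> ys * (if int (ncorr \<theta> ys) \<le> int n then 1 else 0)"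
    proof -
      have aux: "1/2*P*L1 + 1/2*P*L2 \<le> P" if "0 \<le> P" "L1 \<le> 1" "L2 \<le> 1" for P L1 L2 :: real
      proof -
        have "P*L1 \<le> P" "P*L2 \<le> P" using that by (auto simp: mult_left_le)
        then show ?thesis by linarith
      qed
      have "loss \<theta> a \<le> 1" for a by (simp add: loss_def)
      then show ?thesis using aux[OF p] c by simp
    qed
  qed
  also have "\<dots> = pc \<gamma> (int n)" using sumA[of \<theta> \<gamma> "int n"] assms(1) by simp
  also have "\<dots> \<le> 1" using pc_bounds assms by blast
  finally show ?thesis .
qed

lemma prob_const:
  "prob_Y \<theta> (replicate (length ys) g) ys = g ^ ncorr \<theta> ys * (1-g) ^ (length ys - ncorr \<theta> ys)"
proof (induction ys)
  case Nil then show ?case by (simp add: prob_Y_Nil ncorr_def)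
next
  case (Cons y ys)
  have "ncorr \<theta> ys \<le> length ys" by (rule ncorr_le)
  then show ?case using Cons
    by (auto simp: prob_Y_Cons ncorr_Cons Suc_diff_le)
qed


lemma pow_cmp:
  fixes g h :: real
  assumes "0 \<le> h" "h \<le> g" "a \<le> b"
  shows "g ^ a * h ^ b \<le> g ^ b * h ^ a"
proof -
  have "g ^ a * h ^ b = (g ^ a * h ^ a) * h ^ (b - a)"
    using assms(3) by (simp add: power_add[symmetric] mult.assoc)
  also have "\<dots> \<le> (g ^ a * h ^ a) * g ^ (b - a)"
    using assms by (intro mult_left_mono power_mono) auto
  also have "\<dots> = g ^ b * h ^ a"
    using assms(3) by (simp add: power_add[symmetric] algebra_simps)
  finally show ?thesis .
qed

lemma key:
  fixes g :: real
  assumes "odd n" "length ys = n" "1/2 \<le> g" "g \<le> 1"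
  shows "prob_Y True (replicate n g) ys * loss True a + prob_Y False (replicate n g) ys * loss False a
     \<ge> prob_Y True (replicate n g) ys * loss True (majority_rule ys u)
       + prob_Y False (replicate n g) ys * loss False (majority_rule ys u)"
proof -
  define c where "c = ncorr True ys"
  have cn: "c \<le> n" using ncorr_le[of True ys] assms(2) c_def by simp
  have p1: "prob_Y True (replicate n g) ys = g ^ c * (1-g) ^ (n - c)"
    using prob_const[of True ys g] assms(2) c_def by simp
  have p0: "prob_Y False (replicate n g) ys = g ^ (n - c) * (1-g) ^ c"
    using prob_const[of False ys g] assms(2) c_def ncorr_False[of ys] cn by simp
  have h: "0 \<le> 1 - g" "1 - g \<le> g" using assms by auto
  show ?thesis
  proof (cases "majority_rule ys u")
    case True
    then have "\<not> c \<le> n div 2" using maj_iff[OF assms(1,2)] c_def by simp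
    then have "n - c \<le> c" using assms(1) cn by presburger
    then have "prob_Y False (replicate n g) ys \<le> prob_Y True (replicate n g) ys"
      unfolding p0 p1 using pow_cmp[OF h] by blast
    then show ?thesis using True by (simp add: loss_def)
  next
    case False
    then have "c \<le> n div 2" using maj_iff[OF assms(1,2)] c_def by simp
    then have "c \<le> n - c" using assms(1) cn by presburger
    then have "prob_Y True (replicate n g) ys \<le> prob_Y False (replicate n g) ys"
      unfolding p0 p1 using pow_cmp[OF h] by blast
    then show ?thesis using False by (simp add: loss_def)
  qed
qed

lemma lower:
  fixes g :: real
  assumes "odd n" "1/2 \<le> g" "g \<le> 1"
  shows "risk n \<delta> (True, replicate n g) + risk n \<delta> (False, replicate n g)
     \<ge> risk n majority_rule (True, replicate n g) + risk n majority_rule (False, replicate n g)"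
proof -
  let ?p1 = "prob_Y True (replicate n g)" and ?p0 = "prob_Y False (replicate n g)"
  have "risk n majority_rule (True, replicate n g) + risk n majority_rule (False, replicate n g)
     = (\<Sum>ys\<in>obs_space n. 1/2 * (?p1 ys * loss True (majority_rule ys True) + ?p0 ys * loss False (majority_rule ys True))
        + 1/2 * (?p1 ys * loss True (majority_rule ys False) + ?p0 ys * loss False (majority_rule ys False)))"
    unfolding risk_def sum_bool sum.distrib[symmetric] by (intro sum.cong) (auto simp: algebra_simps)
  also have "\<dots> \<le> (\<Sum>ys\<in>obs_space n. 1/2 * (?p1 ys * loss True (\<delta> ys True) + ?p0 ys * loss False (\<delta> ys True))
        + 1/2 * (?p1 ys * loss True (\<delta> ys False) + ?p0 ys * loss False (\<delta> ys False)))"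
  proof (rule sum_mono)
    fix ys assume "ys \<in> obs_space n"
    then have l: "length ys = n" by (simp add: obs_space_def)
    have A: "?p1 ys * loss True (majority_rule ys True) + ?p0 ys * loss False (majority_rule ys True)
        \<le> ?p1 ys * loss True (\<delta> ys True) + ?p0 ys * loss False (\<delta> ys True)"
      using key[OF assms(1) l assms(2,3)] by blast
    have B: "?p1 ys * loss True (majority_rule ys False) + ?p0 ys * loss False (majority_rule ys False)
        \<le> ?p1 ys * loss True (\<delta> ys False) + ?p0 ys * loss False (\<delta> ys False)"
      using key[OF assms(1) l assms(2,3)] by blast
    show "1/2 * (?p1 ys * loss True (majority_rule ys True) + ?p0 ys * loss False (majority_rule ys True))
        + 1/2 * (?p1 ys * loss True (majority_rule ys False) + ?p0 ys * loss False (majority_rule ys False))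
      \<le> 1/2 * (?p1 ys * loss True (\<delta> ys True) + ?p0 ys * loss False (\<delta> ys True))
        + 1/2 * (?p1 ys * loss True (\<delta> ys False) + ?p0 ys * loss False (\<delta> ys False))"
      by (intro add_mono mult_left_mono A B) auto
  qed
  also have "\<dots> = risk n \<delta> (True, replicate n g) + risk n \<delta> (False, replicate n g)"
    unfolding risk_def sum_bool sum.distrib[symmetric] by (intro sum.cong) (auto simp: algebra_simps)
  finally show ?thesis .
qed

theorem theorem8:
  fixes n :: nat and \<epsilon> :: real
  assumes "odd n" and "n > 0" and "0 < \<epsilon>" and "\<epsilon> < 1/2"
  shows "(SUP \<xi>\<in>Theta_star n \<epsilon>. risk n majority_rule \<xi>)
         = (INF \<delta>. SUP \<xi>\<in>Theta_star n \<epsilon>. risk n \<delta> \<xi>)"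
proof -
  define g where "g = 1/2 + \<epsilon>"
  define g0 where "g0 = replicate n g"
  define m where "m = int (n div 2)"
  define V where "V = pc g0 m"
  have g: "1/2 \<le> g" "g \<le> 1" using assms unfolding g_def by auto
  have g0in: "\<forall>x\<in>set g0. 0 \<le> x \<and> x \<le> 1" using g unfolding g0_def by auto
  have mem: "(\<theta>, g0) \<in> Theta_star n \<epsilon>" for \<theta>
    using g unfolding Theta_star_def g0_def g_def by auto
  have ne: "Theta_star n \<epsilon> \<noteq> {}" using mem by blast
  have rm: "risk n majority_rule (\<theta>, g0) = V" for \<theta>
    unfolding V_def m_def using risk_maj[OF assms(1)] g0_def by simp
  have Th: "length \<gamma> = n \<and> (\<forall>x\<in>set \<gamma>. 0 \<le> x \<and> x \<le> 1) \<and> list_all2 (\<le>) g0 \<gamma>"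
    if "(\<theta>, \<gamma>) \<in> Theta_star n \<epsilon>" for \<theta> \<gamma>
  proof -
    have l: "length \<gamma> = n" and b: "\<forall>i<n. 1/2 + \<epsilon> \<le> \<gamma> ! i \<and> \<gamma> ! i \<le> 1"
      using that unfolding Theta_star_def by auto
    have "\<forall>x\<in>set \<gamma>. 0 \<le> x \<and> x \<le> 1"
    proof
      fix x assume "x \<in> set \<gamma>"
      then obtain i where "i < n" "x = \<gamma> ! i" using l by (auto simp: in_set_conv_nth)
      then show "0 \<le> x \<and> x \<le> 1" using b assms(3) by force
    qed
    moreover have "list_all2 (\<le>) g0 \<gamma>"
      unfolding g0_def g_def using l b by (auto simp: list_all2_conv_all_nth)
    ultimately show ?thesis using l by blast
  qed
  have rmle: "risk n majority_rule \<xi> \<le> V" if "\<xi> \<in> Theta_star n \<epsilon>" for \<xi>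
  proof -
    obtain \<theta> \<gamma> where x: "\<xi> = (\<theta>, \<gamma>)" by (cases \<xi>)
    have T: "length \<gamma> = n" "\<forall>x\<in>set \<gamma>. 0 \<le> x \<and> x \<le> 1" "list_all2 (\<le>) g0 \<gamma>"
      using Th that x by auto
    have "risk n majority_rule \<xi> = pc \<gamma> m" unfolding x m_def using risk_maj[OF assms(1) T(1)] by simp
    also have "\<dots> \<le> V" unfolding V_def using pc_anti[OF T(3) g0in T(2)] .
    finally show ?thesis .
  qed
  have bdd: "bdd_above ((\<lambda>\<xi>. risk n \<delta> \<xi>) ` Theta_star n \<epsilon>)" for \<delta>
  proof (rule bdd_aboveI2)
    fix \<xi> assume "\<xi> \<in> Theta_star n \<epsilon>"
    moreover obtain \<theta> \<gamma> where x: "\<xi> = (\<theta>, \<gamma>)" by (cases \<xi>)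
    ultimately show "risk n \<delta> \<xi> \<le> 1" using Th risk_le1 by metis
  qed
  have L: "(SUP \<xi>\<in>Theta_star n \<epsilon>. risk n majority_rule \<xi>) = V"
  proof (rule antisym)
    show "(SUP \<xi>\<in>Theta_star n \<epsilon>. risk n majority_rule \<xi>) \<le> V"
      using ne rmle by (intro cSUP_least) auto
    show "V \<le> (SUP \<xi>\<in>Theta_star n \<epsilon>. risk n majority_rule \<xi>)"
      using cSUP_upper[OF mem[of True] bdd[of majority_rule]] rm by simp
  qed
  have lowS: "V \<le> (SUP \<xi>\<in>Theta_star n \<epsilon>. risk n \<delta> \<xi>)" for \<delta>
  proof -
    have a: "risk n \<delta> (True, g0) \<le> (SUP \<xi>\<in>Theta_star n \<epsilon>. risk n \<delta> \<xi>)"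
      using cSUP_upper[OF mem[of True] bdd[of \<delta>]] .
    have b: "risk n \<delta> (False, g0) \<le> (SUP \<xi>\<in>Theta_star n \<epsilon>. risk n \<delta> \<xi>)"
      using cSUP_upper[OF mem[of False] bdd[of \<delta>]] .
    have "2 * V \<le> risk n \<delta> (True, g0) + risk n \<delta> (False, g0)"
      using lower[OF assms(1) g, of \<delta>] rm unfolding g0_def by simp
    then show ?thesis using a b by linarith
  qed
  have R: "(INF \<delta>. SUP \<xi>\<in>Theta_star n \<epsilon>. risk n \<delta> \<xi>) = V"
  proof (rule antisym)
    have bb: "bdd_below (range (\<lambda>\<delta>. SUP \<xi>\<in>Theta_star n \<epsilon>. risk n \<delta> \<xi>))"
      using lowS by (intro bdd_belowI2) 
    show "(INF \<delta>. SUP \<xi>\<in>Theta_star n \<epsilon>. risk n \<delta> \<xi>) \<le> V"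
      using cINF_lower[OF bb, of majority_rule] L by simp
    show "V \<le> (INF \<delta>. SUP \<xi>\<in>Theta_star n \<epsilon>. risk n \<delta> \<xi>)"
      using lowS by (intro cINF_greatest) auto
  qed
  show ?thesis using L R by simp
qed

end
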